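(* Let $E,r,\sigma>0$, $\gamma=\frac{2r}{\sigma^2}$, and write $f_2^*(\zeta;\gamma)$ for $f_2^*(\zeta)$ to indicate dependence on $\gamma$. Let $\gamma_0=\min\{\gamma>0 : \max_{\zeta>0}f_2^*(\zeta;\gamma)\le\pi\}$ (numerically $\gamma_0\approx0.0167821$). If $\gamma\ge\gamma_0$, then $f_2^*(\zeta;\gamma)\in[0,\pi]$ for every $\zeta>0$, and consequently $\frac{d^2}{d\tau^2}\varrho^{Zhu}(\tau)>0$ for all $\tau>0$; that is, $\tau\mapsto\varrho^{Zhu}(\tau)$ is convex.
   Context: Set $a=\frac{1+\gamma}{2}$, $b=\frac{1-\gamma}{2}$, and for $\zeta>0$ \[ f_1^*(\zeta)=\frac{1}{b^2+\zeta^2}\Big[b\ln\Big(\tfrac{1}{\gamma}\sqrt{a^2+\zeta^2}\Big)+\zeta\arctan(\zeta/a)\Big],\quad f_2^*(\zeta)=\frac{1}{b^2+\zeta^2}\Big[\zeta\ln\Big(\tfrac{1}{\gamma}\sqrt{a^2+\zeta^2}\Big)-b\arctan(\zeta/a)\Big]. \] Zhu's approximation of the early exercise boundary of the American put (as a function of time to maturity $\tau>0$) is \[ \varrho^{Zhu}(\tau)=\frac{\gamma E}{1+\gamma}+\frac{2E}{\pi}\int_0^\infty\frac{\zeta\,e^{-\tau\frac{\sigma^2}{2}(a^2+\zeta^2)}}{a^2+\zeta^2}\,e^{-f_1^*(\zeta)}\sin\big(f_2^*(\zeta)\big)\,d\zeta. \] *)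

theory Defs
  imports "HOL-Analysis.Analysis"
begin

definition zhu_a :: "real \<Rightarrow> real" where "zhu_a \<gamma> = (1 + \<gamma>) / 2"
definition zhu_b :: "real \<Rightarrow> real" where "zhu_b \<gamma> = (1 - \<gamma>) / 2"

definition f1star :: "real \<Rightarrow> real \<Rightarrow> real" where
  "f1star \<zeta> \<gamma> = 1 / ((zhu_b \<gamma>)^2 + \<zeta>^2) *
     (zhu_b \<gamma> * ln ((1 / \<gamma>) * sqrt ((zhu_a \<gamma>)^2 + \<zeta>^2))
      + \<zeta> * arctan (\<zeta> / zhu_a \<gamma>))"

definition f2star :: "real \<Rightarrow> real \<Rightarrow> real" where
  "f2star \<zeta> \<gamma> = 1 / ((zhu_b \<gamma>)^2 + \<zeta>^2) *
     (\<zeta> * ln ((1 / \<gamma>) * sqrt ((zhu_a \<gamma>)^2 + \<zeta>^2))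
      - zhu_b \<gamma> * arctan (\<zeta> / zhu_a \<gamma>))"

text \<open>Zhu's approximation of the early exercise boundary, as a function of tau;
  the integral over (0,infinity) is the (improper) Henstock-Kurzweil integral.\<close>
definition rho_zhu :: "real \<Rightarrow> real \<Rightarrow> real \<Rightarrow> real \<Rightarrow> real" where
  "rho_zhu E \<sigma> \<gamma> \<tau> = \<gamma> * E / (1 + \<gamma>) + 2 * E / pi *
     integral {0<..} (\<lambda>\<zeta>. \<zeta> * exp (- \<tau> * \<sigma>^2 / 2 * ((zhu_a \<gamma>)^2 + \<zeta>^2))
        / ((zhu_a \<gamma>)^2 + \<zeta>^2) * exp (- f1star \<zeta> \<gamma>) * sin (f2star \<zeta> \<gamma>))"

definition gamma0 :: real where
  "gamma0 = Inf {\<gamma>. \<gamma> > 0 \<and> (\<forall>\<zeta>>0. f2star \<zeta> \<gamma> \<le> pi)}"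

end

theory Submission
  imports Defs
begin


lemma exp_taylor2_bound:
  fixes x y :: real
  shows "\<bar>exp (-y) - exp (-x) + (y - x) * exp (-x)\<bar> \<le> (y-x)^2/2 * exp (-x + \<bar>y - x\<bar>)"
proof -
  obtain t where t: "\<bar>t\<bar> \<le> \<bar>x - y\<bar>" and e: "exp (x - y) = (\<Sum>m<2. (x-y)^m / fact m) + exp t / fact 2 * (x-y)^2"
    using Maclaurin_exp_le[of "x-y" 2] by blast
  have e2: "exp (x-y) = 1 + (x - y) + exp t / 2 * (y-x)^2"
    using e by (simp add: numeral_2_eq_2 power2_eq_square algebra_simps)
  have "exp (-y) = exp (-x) * exp (x-y)" by (simp add: exp_add[symmetric])
  also have "\<dots> = exp (-x) * (1 + (x - y) + exp t / 2 * (y-x)^2)"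
    by (simp only: e2)
  also have "\<dots> = exp (-x) * (1 + (x-y)) + exp (-x) * exp t / 2 * (y-x)^2"
    by (simp add: algebra_simps)
  also have "exp (-x) * exp t = exp (-x + t)" by (rule exp_add[symmetric])
  finally have "exp (-y) - exp (-x) + (y - x) * exp (-x) = exp (-x + t) / 2 * (y-x)^2"
    by (simp add: algebra_simps)
  moreover have "exp (-x + t) \<le> exp (-x + \<bar>y - x\<bar>)" using t by (simp add: abs_minus_commute)
  moreover have "exp (-x + t) / 2 * (y-x)^2 \<ge> 0" by simp
  ultimately show ?thesis
    by (metis (no_types, lifting) abs_of_nonneg divide_right_mono mult.commute mult_left_mono zero_le_power2 zero_le_numeral times_divide_eq_right)
qed

lemma exp_minus_open_integrable: "(\<lambda>x::real. exp (- x)) integrable_on {0<..}"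
proof -
  have "(\<lambda>x::real. exp (-1*x)) integrable_on {0..}"
    using integrable_on_exp_minus_to_infinity[of 1 0] by simp
  then have "(\<lambda>x::real. exp (-x)) absolutely_integrable_on {0..}"
    by (intro nonnegative_absolutely_integrable_1) auto
  then have "(\<lambda>x::real. exp (-x)) absolutely_integrable_on {0<..}"
    by (rule set_integrable_subset) auto
  then show ?thesis using set_lebesgue_integral_eq_integral(1) by blast
qed

lemma gauss_integrable:
  fixes e A :: real assumes "e > 0"
  shows "(\<lambda>z. exp (- e * (A + z^2))) absolutely_integrable_on {0<..}"
proof (rule measurable_bounded_by_integrable_imp_absolutely_integrable)
  show "(\<lambda>z. exp (- e * (A + z^2))) \<in> borel_measurable (lebesgue_on {0<..})"
    by (intro continuous_imp_measurable_on_sets_lebesgue continuous_intros) auto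
  show "{0::real<..} \<in> sets lebesgue" by auto
  show "(\<lambda>z. exp (-e*A + 1/(4*e)) * exp (-z)) integrable_on {0<..}"
    using integrable_on_cmult_left[OF exp_minus_open_integrable] by simp
  fix z :: real assume "z \<in> {0<..}"
  have "e*z^2 - z + 1/(4*e) = (2*e*z-1)^2/(4*e)" using assms by (simp add: field_simps power2_eq_square)
  also have "\<dots> \<ge> 0" using assms by simp
  finally have "- e * (A + z^2) \<le> -e*A + 1/(4*e) + - z"
    by (simp add: algebra_simps)
  then show "norm (exp (- e * (A + z^2))) \<le> exp (-e*A + 1/(4*e)) * exp (-z)"
    by (simp add: exp_add[symmetric])
qed

definition slow :: "(real \<Rightarrow> real) \<Rightarrow> real \<Rightarrow> bool" where
  "slow h A \<longleftrightarrow> (\<forall>\<eta>>0. \<exists>B. \<forall>z>0. \<bar>h z\<bar> \<le> B * exp (\<eta> * (A + z^2)))"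

lemma slow_integrable:
  assumes hc: "continuous_on {0<..} h" and hs: "slow h A" and e: "e > 0"
  shows "(\<lambda>z. h z * exp (- e * (A + z^2))) absolutely_integrable_on {0<..}"
proof -
  obtain B where B: "\<And>z. z > 0 \<Longrightarrow> \<bar>h z\<bar> \<le> B * exp (e/2 * (A + z^2))"
    using hs e unfolding slow_def by (meson half_gt_zero)
  show ?thesis
  proof (rule measurable_bounded_by_integrable_imp_absolutely_integrable)
    show "(\<lambda>z. h z * exp (- e * (A + z^2))) \<in> borel_measurable (lebesgue_on {0<..})"
      by (intro continuous_imp_measurable_on_sets_lebesgue continuous_intros hc) auto
    show "{0::real<..} \<in> sets lebesgue" by auto
    have gi: "(\<lambda>z. exp (- (e/2) * (A + z^2))) integrable_on {0<..}"
      using gauss_integrable[of "e/2" A] e set_lebesgue_integral_eq_integral(1) by auto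
    show "(\<lambda>z. B * exp (- (e/2) * (A + z^2))) integrable_on {0<..}"
      using integrable_on_cmult_left[OF gi, of B] by simp
    fix z :: real assume z: "z \<in> {0<..}"
    have "norm (h z * exp (- e * (A + z^2))) = \<bar>h z\<bar> * exp (- e * (A + z^2))"
      by (simp add: abs_mult)
    also have "\<dots> \<le> B * exp (e/2 * (A + z^2)) * exp (- e * (A + z^2))"
      using B[of z] z by (intro mult_right_mono) auto
    also have "\<dots> = B * exp (- (e/2) * (A + z^2))"
      by (simp add: mult.assoc exp_add[symmetric] algebra_simps)
    finally show "norm (h z * exp (- e * (A + z^2))) \<le> B * exp (- (e/2) * (A + z^2))" .
  qed
qed

lemma slow_integrable':
  assumes "continuous_on {0<..} h" and "slow h A" and "e > 0"
  shows "(\<lambda>z. h z * exp (- e * (A + z^2))) integrable_on {0<..}"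
  using slow_integrable[OF assms] set_lebesgue_integral_eq_integral(1) by blast

lemma slow_cmult: "slow h A \<Longrightarrow> slow (\<lambda>z. k * h z) A"
  unfolding slow_def
proof (intro allI impI)
  fix \<eta> :: real assume "\<forall>\<eta>>0. \<exists>B. \<forall>z>0. \<bar>h z\<bar> \<le> B * exp (\<eta> * (A + z\<^sup>2))" "\<eta> > 0"
  then obtain B where B: "\<forall>z>0. \<bar>h z\<bar> \<le> B * exp (\<eta> * (A + z\<^sup>2))" by blast
  show "\<exists>B. \<forall>z>0. \<bar>k * h z\<bar> \<le> B * exp (\<eta> * (A + z\<^sup>2))"
    by (rule exI[of _ "\<bar>k\<bar>*B"]) (auto simp: abs_mult mult.assoc intro: mult_left_mono B[rule_format])
qed

lemma slow_abs: "slow h A \<Longrightarrow> slow (\<lambda>z. \<bar>h z\<bar>) A"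
  unfolding slow_def by simp

lemma slow_umult:
  assumes A: "A \<ge> 0" and hs: "slow h A"
  shows "slow (\<lambda>z. (A + z^2) * h z) A"
  unfolding slow_def
proof (intro allI impI)
  fix \<eta> :: real assume \<eta>: "\<eta> > 0"
  obtain B where B: "\<forall>z>0. \<bar>h z\<bar> \<le> B * exp (\<eta>/2 * (A + z\<^sup>2))"
    using hs \<eta> unfolding slow_def by (meson half_gt_zero)
  show "\<exists>B. \<forall>z>0. \<bar>(A + z^2) * h z\<bar> \<le> B * exp (\<eta> * (A + z\<^sup>2))"
  proof (rule exI[of _ "2/\<eta> * max B 0"], intro allI impI)
    fix z :: real assume z: "z > 0"
    have u: "A + z^2 \<ge> 0" using A by simp
    have "A + z^2 \<le> 2/\<eta> * exp (\<eta>/2 * (A + z^2))"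
    proof -
      have "\<eta>/2 * (A + z^2) \<le> exp (\<eta>/2 * (A + z^2))"
        using exp_ge_add_one_self[of "\<eta>/2 * (A + z^2)"] by linarith
      then show ?thesis using \<eta> by (simp add: field_simps)
    qed
    moreover have "\<bar>h z\<bar> \<le> max B 0 * exp (\<eta>/2 * (A + z\<^sup>2))"
      using B z by (smt (verit) exp_gt_zero mult_right_mono)
    ultimately have "\<bar>(A + z^2) * h z\<bar> \<le> (2/\<eta> * exp (\<eta>/2 * (A + z^2))) * (max B 0 * exp (\<eta>/2 * (A + z\<^sup>2)))"
      unfolding abs_mult using u by (intro mult_mono) auto
    also have "\<dots> = 2/\<eta> * max B 0 * (exp (\<eta>/2 * (A + z^2)) * exp (\<eta>/2 * (A + z^2)))"
      by (simp only: mult_ac)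
    also have "exp (\<eta>/2 * (A + z^2)) * exp (\<eta>/2 * (A + z^2)) = exp (\<eta> * (A + z\<^sup>2))"
      by (simp add: exp_add[symmetric])
    finally show "\<bar>(A + z^2) * h z\<bar> \<le> 2/\<eta> * max B 0 * exp (\<eta> * (A + z\<^sup>2))" .
  qed
qed



lemma J_deriv:
  fixes h :: "real \<Rightarrow> real" and A c \<tau> :: real
  assumes A: "A \<ge> 0" and c: "c > 0" and \<tau>: "\<tau> > 0"
    and hc: "continuous_on {0<..} h" and hs: "slow h A"
  shows "((\<lambda>t. integral {0<..} (\<lambda>z. h z * exp (-(t*c)*(A+z^2)))) has_real_derivative
          integral {0<..} (\<lambda>z. (-c*((A+z^2)*h z)) * exp (-(\<tau>*c)*(A+z^2)))) (at \<tau>)"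
proof -
  define J where "J t = integral {0<..} (\<lambda>z. h z * exp (-(t*c)*(A+z^2)))" for t
  define D where "D = integral {0<..} (\<lambda>z. (-c*((A+z^2)*h z)) * exp (-(\<tau>*c)*(A+z^2)))"
  define W where "W z = (c^2/2 * ((A+z^2) * ((A+z^2) * \<bar>h z\<bar>))) * exp (-(\<tau>/2*c)*(A+z^2))" for z
  have hc1: "continuous_on {0<..} (\<lambda>z. -c*((A+z^2)*h z))"
    by (intro continuous_intros hc)
  have hs1: "slow (\<lambda>z. -c*((A+z^2)*h z)) A"
    by (intro slow_cmult slow_umult A hs)
  have hcW: "continuous_on {0<..} (\<lambda>z. c^2/2 * ((A+z^2) * ((A+z^2) * \<bar>h z\<bar>)))"
    by (intro continuous_intros hc)
  have hsW: "slow (\<lambda>z. c^2/2 * ((A+z^2) * ((A+z^2) * \<bar>h z\<bar>))) A"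
    by (intro slow_cmult slow_umult A slow_abs hs)
  have intW: "W integrable_on {0<..}"
    unfolding W_def using slow_integrable'[OF hcW hsW, of "\<tau>/2*c"] \<tau> c by simp
  have intJ: "(\<lambda>z. h z * exp (-(t*c)*(A+z^2))) integrable_on {0<..}" if "t > 0" for t
    using slow_integrable'[OF hc hs, of "t*c"] that c by simp
  have intD: "(\<lambda>z. (-c*((A+z^2)*h z)) * exp (-(\<tau>*c)*(A+z^2))) integrable_on {0<..}"
    using slow_integrable'[OF hc1 hs1, of "\<tau>*c"] \<tau> c by simp
  have key: "\<bar>J t - J \<tau> - (t-\<tau>)*D\<bar> \<le> (t-\<tau>)^2 * integral {0<..} W"
    if t: "t > 0" "\<bar>t-\<tau>\<bar> \<le> \<tau>/2" for t
  proof -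
    have "J t - J \<tau> - (t-\<tau>)*D = integral {0<..} (\<lambda>z. h z * exp (-(t*c)*(A+z^2)) - h z * exp (-(\<tau>*c)*(A+z^2))
            - (t-\<tau>) * ((-c*((A+z^2)*h z)) * exp (-(\<tau>*c)*(A+z^2))))"
    proof -
      note i1 = intJ[OF t(1)] and i2 = intJ[OF \<tau>]
      note i3 = integrable_on_mult_right[OF intD, of "t-\<tau>"]
      show ?thesis unfolding J_def D_def
        by (subst integral_diff[OF integrable_diff[OF i1 i2] i3], subst integral_diff[OF i1 i2], simp)
    qed
    also have "\<dots> = integral {0<..} (\<lambda>z. h z * (exp (-(t*c*(A+z^2))) - exp (-(\<tau>*c*(A+z^2)))
            + (t*c*(A+z^2) - \<tau>*c*(A+z^2)) * exp (-(\<tau>*c*(A+z^2)))))"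
      by (rule integral_cong) (simp add: algebra_simps)
    finally have eq: "J t - J \<tau> - (t-\<tau>)*D = \<dots>" .
    have bound: "norm (h z * (exp (-(t*c*(A+z^2))) - exp (-(\<tau>*c*(A+z^2)))
            + (t*c*(A+z^2) - \<tau>*c*(A+z^2)) * exp (-(\<tau>*c*(A+z^2))))) \<le> (t-\<tau>)^2 * W z" for z
    proof -
      have u: "A + z^2 \<ge> 0" using A by simp
      have n1: "norm (h z * (exp (-(t*c*(A+z^2))) - exp (-(\<tau>*c*(A+z^2)))
            + (t*c*(A+z^2) - \<tau>*c*(A+z^2)) * exp (-(\<tau>*c*(A+z^2))))) \<le>
            \<bar>h z\<bar> * ((t*c*(A+z^2) - \<tau>*c*(A+z^2))^2/2 * exp (-(\<tau>*c*(A+z^2)) + \<bar>t*c*(A+z^2) - \<tau>*c*(A+z^2)\<bar>))"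
        unfolding real_norm_def abs_mult
        by (intro mult_left_mono exp_taylor2_bound) auto
      have E: "exp (-(\<tau>*c*(A+z^2)) + \<bar>t*c*(A+z^2) - \<tau>*c*(A+z^2)\<bar>) \<le> exp (-(\<tau>/2*c)*(A+z^2))"
      proof -
        have "t*c*(A+z^2) - \<tau>*c*(A+z^2) = (t-\<tau>) * (c*(A+z^2))" by (simp add: algebra_simps)
        then have "\<bar>t*c*(A+z^2) - \<tau>*c*(A+z^2)\<bar> = \<bar>t-\<tau>\<bar> * (c*(A+z^2))"
          using u c by (simp only: abs_mult)
        also have "\<dots> \<le> \<tau>/2 * (c*(A+z^2))" using t u c by (intro mult_right_mono) auto
        finally have X: "\<bar>t*c*(A+z^2) - \<tau>*c*(A+z^2)\<bar> \<le> \<tau>/2 * (c*(A+z^2))" .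
        have "-(\<tau>*c*(A+z^2)) + \<bar>t*c*(A+z^2) - \<tau>*c*(A+z^2)\<bar> \<le> -(\<tau>/2*c)*(A+z^2)"
        proof -
          have "\<tau>/2 * (c*(A+z^2)) = (\<tau>*c*(A+z^2))/2" "-(\<tau>/2*c)*(A+z^2) = -(\<tau>*c*(A+z^2))/2" by simp_all
          then show ?thesis using X by linarith
        qed
        then show ?thesis by simp
      qed
      have d2: "(t*c*(A+z^2) - \<tau>*c*(A+z^2))^2 = (t-\<tau>)^2 * c^2 * (A+z^2)^2"
        by (simp add: algebra_simps power2_eq_square)
      have "\<bar>h z\<bar> * ((t*c*(A+z^2) - \<tau>*c*(A+z^2))^2/2 * exp (-(\<tau>*c*(A+z^2)) + \<bar>t*c*(A+z^2) - \<tau>*c*(A+z^2)\<bar>))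
         \<le> \<bar>h z\<bar> * ((t*c*(A+z^2) - \<tau>*c*(A+z^2))^2/2 * exp (-(\<tau>/2*c)*(A+z^2)))"
        by (intro mult_left_mono E) auto
      also have "\<dots> = (t-\<tau>)^2 * W z"
        unfolding d2 W_def by (simp add: power2_eq_square mult_ac)
      finally show ?thesis using n1 by linarith
    qed
    have "\<bar>J t - J \<tau> - (t-\<tau>)*D\<bar> \<le> integral {0<..} (\<lambda>z. (t-\<tau>)^2 * W z)"
      unfolding eq real_norm_def[symmetric]
    proof (rule integral_norm_bound_integral)
      show "(\<lambda>z. (t-\<tau>)^2 * W z) integrable_on {0<..}"
        using integrable_on_cmult_left[OF intW, of "(t-\<tau>)^2"] by simp
      show "(\<lambda>z. h z * (exp (-(t*c*(A+z^2))) - exp (-(\<tau>*c*(A+z^2)))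
            + (t*c*(A+z^2) - \<tau>*c*(A+z^2)) * exp (-(\<tau>*c*(A+z^2))))) integrable_on {0<..}"
      proof -
        have "(\<lambda>z. h z * exp (-(t*c)*(A+z^2)) - h z * exp (-(\<tau>*c)*(A+z^2))
            - (t-\<tau>) * ((-c*((A+z^2)*h z)) * exp (-(\<tau>*c)*(A+z^2)))) integrable_on {0<..}"
          by (intro integrable_diff intJ t \<tau> integrable_on_mult_right[OF intD, of "t-\<tau>"])
        then show ?thesis
          by (rule integrable_eq) (simp add: algebra_simps)
      qed
    qed (rule bound)
    also have "\<dots> = (t-\<tau>)^2 * integral {0<..} W" by simp
    finally show ?thesis .
  qed
  have lim: "((\<lambda>t. (J t - J \<tau>)/(t-\<tau>) - D) \<longlongrightarrow> 0) (at \<tau>)"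
  proof (rule Lim_null_comparison)
    show "((\<lambda>t. \<bar>t-\<tau>\<bar> * integral {0<..} W) \<longlongrightarrow> 0) (at \<tau>)"
    proof -
      have "((\<lambda>t. \<bar>t-\<tau>\<bar> * integral {0<..} W) \<longlongrightarrow> \<bar>\<tau>-\<tau>\<bar> * integral {0<..} W) (at \<tau>)"
        by (intro tendsto_intros)
      then show ?thesis by simp
    qed
    have ev: "eventually (\<lambda>t. t \<noteq> \<tau> \<and> \<bar>t-\<tau>\<bar> < \<tau>/2) (at \<tau>)"
      unfolding eventually_at using \<tau> by (intro exI[of _ "\<tau>/2"]) (auto simp: dist_real_def)
    show "eventually (\<lambda>t. norm ((J t - J \<tau>)/(t-\<tau>) - D) \<le> \<bar>t-\<tau>\<bar> * integral {0<..} W) (at \<tau>)"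
      using ev
    proof eventually_elim
      case (elim t)
      have a: "\<bar>t-\<tau>\<bar> < \<tau>/2" using elim by simp
      have a2: "-(t-\<tau>) \<le> \<bar>t-\<tau>\<bar>" by (rule abs_ge_minus_self)
      have t0: "t > 0" "\<bar>t-\<tau>\<bar> \<le> \<tau>/2" using a a2 \<tau> by linarith+
      have ne: "t - \<tau> \<noteq> 0" using elim by auto
      have "(J t - J \<tau>)/(t-\<tau>) - D = (J t - J \<tau> - (t-\<tau>)*D)/(t-\<tau>)"
        using ne by (simp add: field_simps)
      then have "norm ((J t - J \<tau>)/(t-\<tau>) - D) = \<bar>J t - J \<tau> - (t-\<tau>)*D\<bar> / \<bar>t-\<tau>\<bar>"
        by simp
      also have "\<dots> \<le> (t-\<tau>)^2 * integral {0<..} W / \<bar>t-\<tau>\<bar>"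
        using key[OF t0] by (intro divide_right_mono) auto
      also have "\<dots> = \<bar>t-\<tau>\<bar> * integral {0<..} W"
      proof (cases "t-\<tau> > 0")
        case True then show ?thesis by (simp add: power2_eq_square)
      next
        case False then have "t-\<tau> < 0" using ne by linarith
        then show ?thesis by (simp add: power2_eq_square field_simps)
      qed
      finally show ?case .
    qed
  qed
  have "((\<lambda>t. (J t - J \<tau>)/(t-\<tau>)) \<longlongrightarrow> D) (at \<tau>)"
    using tendsto_add[OF lim tendsto_const[of D]] by simp
  then show ?thesis
    unfolding J_def D_def has_field_derivative_iff by simp
qed



lemma p_pos:
  fixes \<gamma> s :: real assumes "\<gamma> > 0" "0 \<le> s" "s \<le> 1"
  shows "\<gamma> + s * zhu_b \<gamma> > 0"
proof -
  have "\<gamma> + s * zhu_b \<gamma> = (1-s)*\<gamma> + s*((1+\<gamma>)/2)" by (simp add: zhu_b_def field_simps)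
  moreover have "(1-s)*\<gamma> \<ge> 0" "s*((1+\<gamma>)/2) \<ge> 0" using assms by auto
  moreover have "(1-s)*\<gamma> > 0 \<or> s*((1+\<gamma>)/2) > 0" using assms by (cases "s = 1") auto
  ultimately show ?thesis by linarith
qed

lemma arctan_aux:
  fixes P x k :: real assumes "P \<noteq> 0"
  shows "inverse (1 + (x/P)^2) * (k/P^2) = k/(P^2+x^2)"
proof -
  have P2: "P^2 > 0" using assms by simp
  have "1 + (x/P)^2 = (P^2+x^2)/P^2" using P2 by (simp add: power_divide field_simps)
  moreover have "P^2 + x^2 > 0" using P2 by (simp add: add_pos_nonneg)
  ultimately show ?thesis using P2 by (simp add: field_simps)
qed

lemma Phi2_deriv:
  fixes \<gamma> z s :: real
  assumes g: "\<gamma> > 0" and z: "z > 0" and p: "\<gamma> + s * zhu_b \<gamma> > 0"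
  defines "b \<equiv> zhu_b \<gamma>"
  shows "((\<lambda>s. (z * ln ((\<gamma> + s*b)^2 + (s*z)^2) / 2 - b * arctan (s*z/(\<gamma> + s*b))) / (b^2 + z^2))
     has_real_derivative s*z/((\<gamma> + s*b)^2 + (s*z)^2)) (at s)"
proof -
  have pp: "\<gamma> + s*b > 0" using p b_def by simp
  have Q: "(\<gamma> + s*b)^2 + (s*z)^2 > 0" using pp by (simp add: add_pos_nonneg)
  have D: "b^2 + z^2 > 0" using z by (simp add: add_nonneg_pos)
  define q where "q s = (\<gamma> + s*b)^2 + (s*z)^2" for s
  have d1: "((\<lambda>s. ln (q s)) has_real_derivative (2*b*(\<gamma>+s*b) + 2 * s * z^2)/q s) (at s)"
    unfolding q_def using Q
    by (auto intro!: derivative_eq_intros simp: power2_eq_square field_simps)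
  have d2a: "((\<lambda>s. s*z/(\<gamma> + s*b)) has_real_derivative z*\<gamma>/(\<gamma> + s*b)^2) (at s)"
    using pp by (auto intro!: derivative_eq_intros simp: power2_eq_square field_simps)
  have d2b: "((\<lambda>s. arctan (s*z/(\<gamma> + s*b))) has_real_derivative inverse (1 + (s*z/(\<gamma> + s*b))^2) * (z*\<gamma>/(\<gamma> + s*b)^2)) (at s)"
    by (rule DERIV_chain2[OF DERIV_arctan d2a])
  have "inverse (1 + (s*z/(\<gamma> + s*b))^2) * (z*\<gamma>/(\<gamma> + s*b)^2) = z*\<gamma>/q s"
    unfolding q_def using pp by (intro arctan_aux) simp
  with d2b have d2: "((\<lambda>s. arctan (s*z/(\<gamma> + s*b))) has_real_derivative z*\<gamma>/q s) (at s)" by simp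
  have d3: "((\<lambda>s. (z * ln (q s) / 2 - b * arctan (s*z/(\<gamma> + s*b))) / (b^2 + z^2))
     has_real_derivative (z * ((2*b*(\<gamma>+s*b) + 2 * s * z^2)/q s) / 2 - b * (z*\<gamma>/q s)) / (b^2 + z^2)) (at s)"
    by (intro DERIV_cdivide DERIV_diff DERIV_cmult d1 d2)
  have e: "(z * ((2*b*(\<gamma>+s*b) + 2 * s * z^2)/q s) / 2 - b * (z*\<gamma>/q s)) / (b^2 + z^2) = s*z/q s"
  proof -
    have qn: "q s \<noteq> 0" using Q unfolding q_def by linarith
    have "z * ((2*b*(\<gamma>+s*b) + 2 * s * z^2)/q s) / 2 - b * (z*\<gamma>/q s) = (s*z*(b^2+z^2))/q s"
      using qn by (simp add: field_simps power2_eq_square)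
    then show ?thesis using D by simp
  qed
  have d4: "((\<lambda>s. (z * ln (q s) / 2 - b * arctan (s*z/(\<gamma> + s*b))) / (b^2 + z^2))
     has_real_derivative s*z/q s) (at s)"
    using d3 by (simp only: e)
  show ?thesis using d4 unfolding q_def .
qed

lemma Phi1_deriv:
  fixes \<gamma> z s :: real
  assumes g: "\<gamma> > 0" and z: "z > 0" and p: "\<gamma> + s * zhu_b \<gamma> > 0"
  defines "b \<equiv> zhu_b \<gamma>"
  shows "((\<lambda>s. (b * ln ((\<gamma> + s*b)^2 + (s*z)^2) / 2 + z * arctan (s*z/(\<gamma> + s*b))) / (b^2 + z^2))
     has_real_derivative (\<gamma> + s*b)/((\<gamma> + s*b)^2 + (s*z)^2)) (at s)"
proof -
  have pp: "\<gamma> + s*b > 0" using p b_def by simp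
  have Q: "(\<gamma> + s*b)^2 + (s*z)^2 > 0" using pp by (simp add: add_pos_nonneg)
  have D: "b^2 + z^2 > 0" using z by (simp add: add_nonneg_pos)
  define q where "q s = (\<gamma> + s*b)^2 + (s*z)^2" for s
  have d1: "((\<lambda>s. ln (q s)) has_real_derivative (2*b*(\<gamma>+s*b) + 2 * s * z^2)/q s) (at s)"
    unfolding q_def using Q
    by (auto intro!: derivative_eq_intros simp: power2_eq_square field_simps)
  have d2a: "((\<lambda>s. s*z/(\<gamma> + s*b)) has_real_derivative z*\<gamma>/(\<gamma> + s*b)^2) (at s)"
    using pp by (auto intro!: derivative_eq_intros simp: power2_eq_square field_simps)
  have d2b: "((\<lambda>s. arctan (s*z/(\<gamma> + s*b))) has_real_derivative inverse (1 + (s*z/(\<gamma> + s*b))^2) * (z*\<gamma>/(\<gamma> + s*b)^2)) (at s)"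
    by (rule DERIV_chain2[OF DERIV_arctan d2a])
  have "inverse (1 + (s*z/(\<gamma> + s*b))^2) * (z*\<gamma>/(\<gamma> + s*b)^2) = z*\<gamma>/q s"
    unfolding q_def using pp by (intro arctan_aux) simp
  with d2b have d2: "((\<lambda>s. arctan (s*z/(\<gamma> + s*b))) has_real_derivative z*\<gamma>/q s) (at s)" by simp
  have d3: "((\<lambda>s. (b * ln (q s) / 2 + z * arctan (s*z/(\<gamma> + s*b))) / (b^2 + z^2))
     has_real_derivative (b * ((2*b*(\<gamma>+s*b) + 2 * s * z^2)/q s) / 2 + z * (z*\<gamma>/q s)) / (b^2 + z^2)) (at s)"
    by (intro DERIV_cdivide DERIV_add DERIV_cmult d1 d2)
  have e: "(b * ((2*b*(\<gamma>+s*b) + 2 * s * z^2)/q s) / 2 + z * (z*\<gamma>/q s)) / (b^2 + z^2) = (\<gamma> + s*b)/q s"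
  proof -
    have qn: "q s \<noteq> 0" using Q unfolding q_def by linarith
    have "b * ((2*b*(\<gamma>+s*b) + 2 * s * z^2)/q s) / 2 + z * (z*\<gamma>/q s) = (\<gamma> + s*b)/q s * (b^2+z^2)"
      using qn by (simp add: field_simps power2_eq_square)
    then show ?thesis using D z by simp
  qed
  have d4: "((\<lambda>s. (b * ln (q s) / 2 + z * arctan (s*z/(\<gamma> + s*b))) / (b^2 + z^2))
     has_real_derivative (\<gamma> + s*b)/q s) (at s)"
    using d3 by (simp only: e)
  show ?thesis using d4 unfolding q_def .
qed

lemma ln_aux:
  fixes \<gamma> x :: real assumes "\<gamma> > 0" "x > 0"
  shows "ln ((1/\<gamma>) * sqrt x) = ln x / 2 - ln (\<gamma>^2) / 2"
  using assms by (simp add: ln_mult ln_sqrt ln_div ln_realpow)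

lemma f2_hasint:
  fixes \<gamma> z :: real assumes g: "\<gamma> > 0" and z: "z > 0"
  shows "((\<lambda>s. s*z/((\<gamma> + s*zhu_b \<gamma>)^2 + (s*z)^2)) has_integral f2star z \<gamma>) {0..1}"
proof -
  define b where "b = zhu_b \<gamma>"
  define F where "F s = (z * ln ((\<gamma> + s*b)^2 + (s*z)^2) / 2 - b * arctan (s*z/(\<gamma> + s*b))) / (b^2 + z^2)" for s
  have "((\<lambda>s. s*z/((\<gamma> + s*b)^2 + (s*z)^2)) has_integral (F 1 - F 0)) {0..1}"
  proof (rule fundamental_theorem_of_calculus)
    fix s :: real assume s: "s \<in> {0..1}"
    have "(F has_real_derivative s*z/((\<gamma> + s*b)^2 + (s*z)^2)) (at s)"
      unfolding F_def b_def using Phi2_deriv[OF g z p_pos[OF g]] s by auto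
    then show "(F has_vector_derivative s*z/((\<gamma> + s*b)^2 + (s*z)^2)) (at s within {0..1})"
      by (simp add: has_real_derivative_iff_has_vector_derivative has_vector_derivative_at_within)
  qed simp
  moreover have "F 1 - F 0 = f2star z \<gamma>"
  proof -
    have a: "\<gamma> + b = zhu_a \<gamma>" by (simp add: b_def zhu_a_def zhu_b_def field_simps)
    have apos: "zhu_a \<gamma> > 0" using g by (simp add: zhu_a_def)
    have F1: "F 1 = (z * ln ((zhu_a \<gamma>)^2 + z^2) / 2 - b * arctan (z / zhu_a \<gamma>)) / (b^2 + z^2)"
      unfolding F_def by (simp add: a)
    have F0: "F 0 = (z * ln (\<gamma>^2) / 2) / (b^2 + z^2)" unfolding F_def by simp
    have "F 1 - F 0 = (z * (ln ((zhu_a \<gamma>)^2 + z^2) / 2 - ln (\<gamma>^2) / 2) - b * arctan (z / zhu_a \<gamma>)) / (b^2+z^2)"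
      unfolding F1 F0 by (simp add: diff_divide_distrib right_diff_distrib)
    also have "\<dots> = f2star z \<gamma>"
      unfolding f2star_def b_def[symmetric] using ln_aux[OF g, of "(zhu_a \<gamma>)^2 + z^2"] z
      by (simp add: add_nonneg_pos)
    finally show ?thesis .
  qed
  ultimately show ?thesis by (simp add: b_def)
qed

lemma f1_hasint:
  fixes \<gamma> z :: real assumes g: "\<gamma> > 0" and z: "z > 0"
  shows "((\<lambda>s. (\<gamma> + s*zhu_b \<gamma>)/((\<gamma> + s*zhu_b \<gamma>)^2 + (s*z)^2)) has_integral f1star z \<gamma>) {0..1}"
proof -
  define b where "b = zhu_b \<gamma>"
  define F where "F s = (b * ln ((\<gamma> + s*b)^2 + (s*z)^2) / 2 + z * arctan (s*z/(\<gamma> + s*b))) / (b^2 + z^2)" for s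
  have "((\<lambda>s. (\<gamma> + s*b)/((\<gamma> + s*b)^2 + (s*z)^2)) has_integral (F 1 - F 0)) {0..1}"
  proof (rule fundamental_theorem_of_calculus)
    fix s :: real assume s: "s \<in> {0..1}"
    have "(F has_real_derivative (\<gamma> + s*b)/((\<gamma> + s*b)^2 + (s*z)^2)) (at s)"
      unfolding F_def b_def using Phi1_deriv[OF g z p_pos[OF g]] s by auto
    then show "(F has_vector_derivative (\<gamma> + s*b)/((\<gamma> + s*b)^2 + (s*z)^2)) (at s within {0..1})"
      by (simp add: has_real_derivative_iff_has_vector_derivative has_vector_derivative_at_within)
  qed simp
  moreover have "F 1 - F 0 = f1star z \<gamma>"
  proof -
    have a: "\<gamma> + b = zhu_a \<gamma>" by (simp add: b_def zhu_a_def zhu_b_def field_simps)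
    have apos: "zhu_a \<gamma> > 0" using g by (simp add: zhu_a_def)
    have F1: "F 1 = (b * ln ((zhu_a \<gamma>)^2 + z^2) / 2 + z * arctan (z / zhu_a \<gamma>)) / (b^2 + z^2)"
      unfolding F_def by (simp add: a)
    have F0: "F 0 = (b * ln (\<gamma>^2) / 2) / (b^2 + z^2)" unfolding F_def by simp
    have "F 1 - F 0 = (b * (ln ((zhu_a \<gamma>)^2 + z^2) / 2 - ln (\<gamma>^2) / 2) + z * arctan (z / zhu_a \<gamma>)) / (b^2+z^2)"
      unfolding F1 F0 by (simp add: diff_divide_distrib add_divide_distrib right_diff_distrib)
    also have "\<dots> = f1star z \<gamma>"
      unfolding f1star_def b_def[symmetric] using ln_aux[OF g, of "(zhu_a \<gamma>)^2 + z^2"] z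
      by (simp add: add_nonneg_pos)
    finally show ?thesis .
  qed
  ultimately show ?thesis by (simp add: b_def)
qed



lemma p_ge_min:
  fixes \<gamma> s :: real assumes "\<gamma> > 0" "0 \<le> s" "s \<le> 1"
  shows "\<gamma> + s * zhu_b \<gamma> \<ge> min \<gamma> (zhu_a \<gamma>)"
proof -
  have e: "\<gamma> + s * zhu_b \<gamma> = (1-s)*\<gamma> + s*zhu_a \<gamma>" by (simp add: zhu_b_def zhu_a_def field_simps)
  have "(1-s)*\<gamma> \<ge> (1-s)*min \<gamma> (zhu_a \<gamma>)" "s*zhu_a \<gamma> \<ge> s*min \<gamma> (zhu_a \<gamma>)"
    using assms by (auto intro: mult_left_mono)
  then show ?thesis unfolding e by (simp add: algebra_simps)
qed

lemma f1_nonneg: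
  fixes \<gamma> z :: real assumes g: "\<gamma> > 0" and z: "z > 0"
  shows "f1star z \<gamma> \<ge> 0"
proof (rule has_integral_nonneg[OF f1_hasint[OF g z]])
  fix s :: real assume "s \<in> {0..1}"
  then have p: "\<gamma> + s * zhu_b \<gamma> > 0" using p_pos[OF g] by auto
  then have "(\<gamma> + s * zhu_b \<gamma>)^2 + (s*z)^2 > 0" by (simp add: add_pos_nonneg)
  with p show "0 \<le> (\<gamma> + s * zhu_b \<gamma>)/((\<gamma> + s * zhu_b \<gamma>)^2 + (s*z)^2)" by simp
qed

lemma f2_nonneg:
  fixes \<gamma> z :: real assumes g: "\<gamma> > 0" and z: "z > 0"
  shows "f2star z \<gamma> \<ge> 0"
proof (rule has_integral_nonneg[OF f2_hasint[OF g z]])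
  fix s :: real assume s: "s \<in> {0..1}"
  then have p: "\<gamma> + s * zhu_b \<gamma> > 0" using p_pos[OF g] by auto
  then have "(\<gamma> + s * zhu_b \<gamma>)^2 + (s*z)^2 > 0" by (simp add: add_pos_nonneg)
  with s z show "0 \<le> s*z/((\<gamma> + s * zhu_b \<gamma>)^2 + (s*z)^2)" by simp
qed

lemma f2_pos:
  fixes \<gamma> z :: real assumes g: "\<gamma> > 0" and z: "z > 0"
  shows "f2star z \<gamma> > 0"
proof -
  define b where "b = zhu_b \<gamma>"
  define M where "M = (\<gamma> + \<bar>b\<bar>)^2 + z^2"
  have M: "M > 0" unfolding M_def using z by (simp add: add_nonneg_pos)
  have hi: "((\<lambda>s. s * (z/M)) has_integral z/(2*M)) {0..1}"
  proof -
    have "((\<lambda>s. s * (z/M)) has_integral ((1::real)^2/2*(z/M) - 0^2/2*(z/M))) {0..1}"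
    proof (rule fundamental_theorem_of_calculus)
      fix s :: real assume "s \<in> {0..1}"
      have "((\<lambda>s. s^2/2*(z/M)) has_real_derivative s * (z/M)) (at s)"
        using M by (auto intro!: derivative_eq_intros)
      then show "((\<lambda>s. s^2/2*(z/M)) has_vector_derivative s * (z/M)) (at s within {0..1})"
        by (simp add: has_real_derivative_iff_has_vector_derivative has_vector_derivative_at_within)
    qed (use M in simp)
    then show ?thesis using M by simp
  qed
  have "z/(2*M) \<le> f2star z \<gamma>"
  proof (rule has_integral_le[OF hi f2_hasint[OF g z]])
    fix s :: real assume s: "s \<in> {0..1}"
    have p: "\<gamma> + s*b > 0" using p_pos[OF g] s b_def by auto
    have Q: "(\<gamma> + s*b)^2 + (s*z)^2 > 0" using p by (simp add: add_pos_nonneg)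
    have "s*b \<le> s*\<bar>b\<bar>" using s by (intro mult_left_mono) auto
    moreover have "s*\<bar>b\<bar> \<le> \<bar>b\<bar>" using s by (intro mult_left_le_one_le) auto
    ultimately have "\<gamma> + s*b \<le> \<gamma> + \<bar>b\<bar>" by linarith
    then have "(\<gamma> + s*b)^2 \<le> (\<gamma> + \<bar>b\<bar>)^2" using p by (intro power_mono) auto
    moreover have "(s*z)^2 \<le> z^2" using s z by (intro power_mono) (auto simp: mult_left_le_one_le)
    ultimately have QM: "(\<gamma> + s*b)^2 + (s*z)^2 \<le> M" unfolding M_def by linarith
    have "s * (z/M) = (s*z)/M" by simp
    also have "\<dots> \<le> (s*z)/((\<gamma> + s*b)^2 + (s*z)^2)"
      using s z Q QM by (intro divide_left_mono) auto
    finally show "s * (z/M) \<le> s*z/((\<gamma> + s*zhu_b \<gamma>)^2 + (s*z)^2)" by (simp add: b_def)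
  qed
  moreover have "z/(2*M) > 0" using z M by simp
  ultimately show ?thesis by linarith
qed

lemma f2_small:
  fixes \<gamma> z :: real assumes g: "\<gamma> > 0" and z: "z > 0"
  shows "f2star z \<gamma> \<le> z / (min \<gamma> (zhu_a \<gamma>))^2"
proof -
  define m where "m = min \<gamma> (zhu_a \<gamma>)"
  have m: "m > 0" using g by (simp add: m_def zhu_a_def)
  have hc: "((\<lambda>s. z/m^2) has_integral z/m^2) {0..1::real}"
    using has_integral_const_real[of "z/m^2" 0 "1::real"] by simp
  have "f2star z \<gamma> \<le> z/m^2"
  proof (rule has_integral_le[OF f2_hasint[OF g z] hc])
    fix s :: real assume s: "s \<in> {0..1}"
    have p: "\<gamma> + s*zhu_b \<gamma> \<ge> m" using p_ge_min[OF g] s m_def by auto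
    then have "m^2 \<le> (\<gamma> + s*zhu_b \<gamma>)^2" using m by (intro power_mono) auto
    then have Q: "m^2 \<le> (\<gamma> + s*zhu_b \<gamma>)^2 + (s*z)^2" using zero_le_power2[of "s*z"] by linarith
    have "s*z/((\<gamma> + s*zhu_b \<gamma>)^2 + (s*z)^2) \<le> s*z/m^2"
    proof -
      have "m^2 > 0" using m by simp
      then have "(\<gamma> + s*zhu_b \<gamma>)^2 + (s*z)^2 > 0" using Q by linarith
      then show ?thesis using s z m Q by (intro divide_left_mono) auto
    qed
    also have "\<dots> \<le> z/m^2" using s z m by (intro divide_right_mono) (auto simp: mult_left_le_one_le)
    finally show "s*z/((\<gamma> + s*zhu_b \<gamma>)^2 + (s*z)^2) \<le> z/m^2" .
  qed
  then show ?thesis by (simp add: m_def)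
qed

lemma f2_at_1:
  fixes z :: real assumes z: "z > 0"
  shows "f2star z 1 \<le> pi"
proof -
  have hc: "((\<lambda>s. 1/2) has_integral 1/2) {0..1::real}"
    using has_integral_const_real[of "1/2" 0 "1::real"] by simp
  have "f2star z 1 \<le> 1/2"
  proof (rule has_integral_le[OF f2_hasint[OF _ z] hc])
    fix s :: real assume s: "s \<in> {0..1}"
    have "0 \<le> (s*z - 1)^2" by simp
    then have le: "2*(s*z) \<le> 1 + (s*z)^2" by (simp add: power2_diff)
    have pos: "0 < 1 + (s*z)^2" by (simp add: add_pos_nonneg)
    have "zhu_b 1 = 0" by (simp add: zhu_b_def)
    then have "s*z/((1 + s*zhu_b 1)^2 + (s*z)^2) = s*z/(1 + (s*z)^2)" by simp
    also have "\<dots> \<le> 1/2" using le pos by (simp add: pos_divide_le_eq)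
    finally show "s*z/((1 + s*zhu_b 1)^2 + (s*z)^2) \<le> 1/2" .
  qed simp
  then show ?thesis using pi_gt3 by simp
qed

lemma f2_mono:
  fixes g1 g2 z :: real assumes g1: "g1 > 0" and le: "g1 \<le> g2" and z: "z > 0"
  shows "f2star z g2 \<le> f2star z g1"
proof (rule has_integral_le[OF f2_hasint f2_hasint])
  show "g2 > 0" "z > 0" "g1 > 0" "z > 0" using assms by auto
  fix s :: real assume s: "s \<in> {0..1}"
  have p1: "g1 + s * zhu_b g1 > 0" using p_pos[OF g1] s by auto
  have "g2 + s * zhu_b g2 - (g1 + s * zhu_b g1) = (g2 - g1)*(1 - s/2)"
    by (simp add: zhu_b_def field_simps)
  also have "\<dots> \<ge> 0" using le s by auto
  finally have "g1 + s * zhu_b g1 \<le> g2 + s * zhu_b g2" by simp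
  then have "(g1 + s * zhu_b g1)^2 \<le> (g2 + s * zhu_b g2)^2" using p1 by (intro power_mono) auto
  then have "(g1 + s * zhu_b g1)^2 + (s*z)^2 \<le> (g2 + s * zhu_b g2)^2 + (s*z)^2" by simp
  moreover have "(g1 + s * zhu_b g1)^2 + (s*z)^2 > 0" using p1 by (simp add: add_pos_nonneg)
  ultimately show "s*z/((g2 + s * zhu_b g2)^2 + (s*z)^2) \<le> s*z/((g1 + s * zhu_b g1)^2 + (s*z)^2)"
    using s z by (intro divide_left_mono) auto
qed



lemma f2_cont_gamma:
  fixes \<gamma> z :: real assumes g: "\<gamma> > 0" and z: "z > 0"
  shows "isCont (\<lambda>g. f2star z g) \<gamma>"
proof -
  have d: "((1 - \<gamma>)/2)^2 + z^2 \<noteq> 0" using z by (smt (verit) zero_le_power2 zero_less_power2)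
  have l: "(1/\<gamma>) * sqrt (((1 + \<gamma>)/2)^2 + z^2) > 0" using g z by (simp add: add_nonneg_pos)
  have a: "(1 + \<gamma>)/2 \<noteq> 0" using g by simp
  show ?thesis
    unfolding f2star_def zhu_a_def zhu_b_def
    using d l a g by (intro continuous_intros) auto
qed

definition S0 :: "real set" where "S0 = {\<gamma>. \<gamma> > 0 \<and> (\<forall>\<zeta>>0. f2star \<zeta> \<gamma> \<le> pi)}"

lemma gamma0_ok:
  fixes \<gamma> :: real assumes g: "\<gamma> > 0" and ge: "\<gamma> \<ge> gamma0"
  shows "\<forall>z>0. f2star z \<gamma> \<le> pi"
proof (intro allI impI)
  fix z :: real assume z: "z > 0"
  have g0: "gamma0 = Inf S0" unfolding gamma0_def S0_def ..
  have "1 \<in> S0" using f2_at_1 unfolding S0_def by auto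
  then have ne: "S0 \<noteq> {}" by auto
  have bdd: "bdd_below S0" unfolding S0_def by (rule bdd_belowI[of _ 0]) auto
  show "f2star z \<gamma> \<le> pi"
  proof (cases "\<gamma> > gamma0")
    case True
    then obtain x where x: "x \<in> S0" "x < \<gamma>" using cInf_less_iff[OF ne bdd] g0 by auto
    have "f2star z \<gamma> \<le> f2star z x" using x by (intro f2_mono) (auto simp: S0_def z)
    also have "\<dots> \<le> pi" using x z by (auto simp: S0_def)
    finally show ?thesis .
  next
    case False
    then have eq: "\<gamma> = gamma0" using ge by simp
    show ?thesis
    proof (rule ccontr)
      assume "\<not> f2star z \<gamma> \<le> pi"
      then have gt: "pi < f2star z \<gamma>" by simp
      have "((\<lambda>g. f2star z g) \<longlongrightarrow> f2star z \<gamma>) (at \<gamma>)"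
        using f2_cont_gamma[OF g z] by (simp add: isCont_def)
      from order_tendstoD(1)[OF this gt]
      obtain d where d: "d > 0" "\<And>x. x \<noteq> \<gamma> \<Longrightarrow> dist x \<gamma> < d \<Longrightarrow> pi < f2star z x"
        unfolding eventually_at by blast
      have "Inf S0 < \<gamma> + d" using eq g0 d by simp
      then obtain x where x: "x \<in> S0" "x < \<gamma> + d" using cInf_less_iff[OF ne bdd] by auto
      have "x \<ge> \<gamma>" using cInf_lower[OF x(1) bdd] eq g0 by simp
      have xle: "f2star z x \<le> pi" using x z by (auto simp: S0_def)
      show False
      proof (cases "x = \<gamma>")
        case True then show False using xle gt by simp
      next
        case False
        then have "pi < f2star z x" using d(2)[of x] x \<open>x \<ge> \<gamma>\<close> by (auto simp: dist_real_def)
        then show False using xle by simp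
      qed
    qed
  qed
qed



lemma f12_cont:
  fixes \<gamma> :: real assumes g: "\<gamma> > 0"
  shows "continuous_on {0<..} (\<lambda>z. f1star z \<gamma>)" "continuous_on {0<..} (\<lambda>z. f2star z \<gamma>)"
proof -
  have a: "zhu_a \<gamma> > 0" using g by (simp add: zhu_a_def)
  have d: "\<forall>z\<in>{0<..}. (zhu_b \<gamma>)^2 + z^2 \<noteq> 0"
    by (auto simp: add_nonneg_pos)
  have l: "\<forall>z\<in>{0<..}. (1/\<gamma>) * sqrt ((zhu_a \<gamma>)^2 + z^2) > 0"
    using g by (auto simp: add_nonneg_pos)
  show "continuous_on {0<..} (\<lambda>z. f1star z \<gamma>)"
    unfolding f1star_def using d l a by (intro continuous_intros) auto
  show "continuous_on {0<..} (\<lambda>z. f2star z \<gamma>)"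
    unfolding f2star_def using d l a by (intro continuous_intros) auto
qed

lemma g_slow:
  fixes \<gamma> :: real assumes g: "\<gamma> > 0"
  shows "slow (\<lambda>z. z/((zhu_a \<gamma>)^2+z^2) * exp (- f1star z \<gamma>) * sin (f2star z \<gamma>)) ((zhu_a \<gamma>)^2)"
  unfolding slow_def
proof (intro allI impI)
  fix \<eta> :: real assume \<eta>: "\<eta> > 0"
  define a where "a = zhu_a \<gamma>"
  have a: "a > 0" using g by (simp add: a_def zhu_a_def)
  show "\<exists>B. \<forall>z>0. \<bar>z/((zhu_a \<gamma>)^2+z^2) * exp (- f1star z \<gamma>) * sin (f2star z \<gamma>)\<bar> \<le> B * exp (\<eta> * ((zhu_a \<gamma>)^2 + z^2))"
  proof (rule exI[of _ "1/(2*a)"], intro allI impI)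
    fix z :: real assume z: "z > 0"
    have u: "a^2 + z^2 > 0" using z by (simp add: add_nonneg_pos)
    have e1: "exp (- f1star z \<gamma>) \<le> 1" using f1_nonneg[OF g z] by simp
    have "\<bar>z/(a^2+z^2) * exp (- f1star z \<gamma>) * sin (f2star z \<gamma>)\<bar>
        = z/(a^2+z^2) * (exp (- f1star z \<gamma>) * \<bar>sin (f2star z \<gamma>)\<bar>)"
      using z u by (simp add: abs_mult)
    also have "\<dots> \<le> z/(a^2+z^2) * 1"
    proof (intro mult_left_mono)
      have "\<bar>sin (f2star z \<gamma>)\<bar> \<le> 1" by (rule abs_sin_le_one)
      then show "exp (- f1star z \<gamma>) * \<bar>sin (f2star z \<gamma>)\<bar> \<le> 1"
        using e1 by (simp add: mult_le_one)
    qed (use z u in simp)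
    also have "\<dots> \<le> 1/(2*a)"
    proof -
      have "0 \<le> (a - z)^2" by simp
      then have "2*a*z \<le> a^2 + z^2" by (simp add: power2_diff)
      then show ?thesis using a u by (simp add: field_simps)
    qed
    also have "\<dots> \<le> 1/(2*a) * exp (\<eta> * (a^2 + z^2))"
      using a \<eta> u by (simp add: field_simps)
    finally show "\<bar>z/((zhu_a \<gamma>)^2+z^2) * exp (- f1star z \<gamma>) * sin (f2star z \<gamma>)\<bar> \<le> 1/(2*a) * exp (\<eta> * ((zhu_a \<gamma>)^2 + z^2))"
      by (simp add: a_def)
  qed
qed

lemma g_cont:
  fixes \<gamma> :: real assumes g: "\<gamma> > 0"
  shows "continuous_on {0<..} (\<lambda>z. z/((zhu_a \<gamma>)^2+z^2) * exp (- f1star z \<gamma>) * sin (f2star z \<gamma>))"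
proof -
  have "\<forall>z\<in>{0<..}. (zhu_a \<gamma>)^2+z^2 \<noteq> 0" by (auto simp: add_nonneg_pos)
  then show ?thesis using f12_cont[OF g] by (intro continuous_intros) auto
qed



lemma pos_integral_aux:
  fixes F :: "real \<Rightarrow> real" and l u :: real
  assumes lu: "0 < l" "l < u" and int: "F integrable_on {0<..}"
    and nn: "\<And>z. z > 0 \<Longrightarrow> F z \<ge> 0" and pos: "\<And>z. l \<le> z \<Longrightarrow> z \<le> u \<Longrightarrow> F z > 0"
    and cont: "continuous_on {l..u} F"
  shows "integral {0<..} F > 0"
proof -
  obtain x where x: "x \<in> {l..u}" "\<And>y. y \<in> {l..u} \<Longrightarrow> F x \<le> F y"
    using continuous_attains_inf[OF compact_Icc _ cont] lu by fastforce
  have Fx: "F x > 0" using pos x by auto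
  have sub: "{l..u} \<subseteq> {0<..}" using lu by auto
  have int2: "F integrable_on {l..u}" by (rule integrable_on_subinterval[OF int sub])
  have hc: "((\<lambda>y. F x) has_integral F x * (u - l)) {l..u}"
    using has_integral_const_real[of "F x" l u] lu by (simp add: mult.commute)
  have "F x * (u - l) \<le> integral {l..u} F"
    by (rule has_integral_le[OF hc integrable_integral[OF int2]]) (use x in auto)
  also have "\<dots> \<le> integral {0<..} F"
    by (rule integral_subset_le[OF sub int2 int]) (use nn in auto)
  finally show ?thesis using Fx lu by (smt (verit) mult_pos_pos)
qed

lemma main_analytic:
  fixes E \<sigma> \<gamma> :: real
  assumes E: "E > 0" and \<sigma>: "\<sigma> > 0" and g: "\<gamma> > 0"
    and f2r: "\<forall>z>0. f2star z \<gamma> \<in> {0..pi}"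
  shows "(\<forall>\<tau>>0. rho_zhu E \<sigma> \<gamma> differentiable (at \<tau>)
          \<and> deriv (rho_zhu E \<sigma> \<gamma>) differentiable (at \<tau>)
          \<and> deriv (deriv (rho_zhu E \<sigma> \<gamma>)) \<tau> > 0)
    \<and> convex_on {0<..} (rho_zhu E \<sigma> \<gamma>)"
proof -
  define c where "c = \<sigma>^2/2"
  define A where "A = (zhu_a \<gamma>)^2"
  define gg where "gg z = z/((zhu_a \<gamma>)^2+z^2) * exp (- f1star z \<gamma>) * sin (f2star z \<gamma>)" for z
  define g1 where "g1 z = -c*((A+z^2)*gg z)" for z
  define g2 where "g2 z = -c*((A+z^2)*g1 z)" for z
  define J where "J h t = integral {0<..} (\<lambda>z. h z * exp (-(t*c)*(A+z^2)))" for h t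
  define K0 where "K0 = \<gamma> * E / (1 + \<gamma>)"
  define K1 where "K1 = 2 * E / pi"
  have c: "c > 0" using \<sigma> by (simp add: c_def)
  have A: "A \<ge> 0" by (simp add: A_def)
  have K1: "K1 > 0" using E by (simp add: K1_def)
  have gc: "continuous_on {0<..} gg" unfolding gg_def by (rule g_cont[OF g])
  have gs: "slow gg A" unfolding gg_def A_def by (rule g_slow[OF g])
  have g1c: "continuous_on {0<..} g1" unfolding g1_def by (intro continuous_intros gc)
  have g1s: "slow g1 A" unfolding g1_def by (intro slow_cmult slow_umult A gs)
  have g2c: "continuous_on {0<..} g2" unfolding g2_def by (intro continuous_intros g1c)
  have g2s: "slow g2 A" unfolding g2_def by (intro slow_cmult slow_umult A g1s)
  have rho: "rho_zhu E \<sigma> \<gamma> = (\<lambda>t. K0 + K1 * J gg t)"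
  proof
    fix t
    have "(\<lambda>\<zeta>. \<zeta> * exp (- t * \<sigma>^2 / 2 * ((zhu_a \<gamma>)^2 + \<zeta>^2))
        / ((zhu_a \<gamma>)^2 + \<zeta>^2) * exp (- f1star \<zeta> \<gamma>) * sin (f2star \<zeta> \<gamma>))
        = (\<lambda>z. gg z * exp (-(t*c)*(A+z^2)))"
      by (rule ext) (simp add: gg_def A_def c_def)
    then show "rho_zhu E \<sigma> \<gamma> t = K0 + K1 * J gg t"
      unfolding rho_zhu_def J_def K0_def K1_def by simp
  qed
  have dJ: "((\<lambda>t. J gg t) has_real_derivative J g1 \<tau>) (at \<tau>)" if "\<tau> > 0" for \<tau>
    unfolding J_def g1_def using J_deriv[OF A c that gc gs] .
  have dJ1: "((\<lambda>t. J g1 t) has_real_derivative J g2 \<tau>) (at \<tau>)" if "\<tau> > 0" for \<tau>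
    unfolding J_def g2_def using J_deriv[OF A c that g1c g1s] .
  have d0: "(rho_zhu E \<sigma> \<gamma> has_real_derivative K1 * J g1 \<tau>) (at \<tau>)" if "\<tau> > 0" for \<tau>
    unfolding rho using dJ[OF that] by (auto intro!: derivative_eq_intros)
  have dd: "deriv (rho_zhu E \<sigma> \<gamma>) t = K1 * J g1 t" if "t > 0" for t
    using DERIV_imp_deriv[OF d0[OF that]] .
  have d1: "(deriv (rho_zhu E \<sigma> \<gamma>) has_real_derivative K1 * J g2 \<tau>) (at \<tau>)" if "\<tau> > 0" for \<tau>
  proof (rule has_field_derivative_transform_within_open[of "\<lambda>t. K1 * J g1 t" _ _ "{0<..}"])
    show "((\<lambda>t. K1 * J g1 t) has_real_derivative K1 * J g2 \<tau>) (at \<tau>)"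
      using dJ1[OF that] by (auto intro!: derivative_eq_intros)
  qed (use that dd in auto)
  have J2pos: "J g2 \<tau> > 0" if \<tau>: "\<tau> > 0" for \<tau>
  proof -
    define m where "m = min \<gamma> (zhu_a \<gamma>)"
    have m: "m > 0" using g by (simp add: m_def zhu_a_def)
    define u where "u = min 1 (m^2)"
    have u: "u > 0" "u \<le> 1" "u \<le> m^2" using m by (auto simp: u_def)
    have eqF: "g2 z * exp (-(\<tau>*c)*(A+z^2)) = c^2 * (A+z^2) * z * exp (- f1star z \<gamma>) * sin (f2star z \<gamma>) * exp (-(\<tau>*c)*(A+z^2))"
      if "z > 0" for z
    proof -
      have pos: "A + z^2 > 0" using that A by (simp add: add_nonneg_pos)
      have e1: "g2 z = c^2 * (A+z^2) * ((A+z^2) * gg z)" by (simp add: g2_def g1_def power2_eq_square)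
      have e2: "(A+z^2) * gg z = z * exp (- f1star z \<gamma>) * sin (f2star z \<gamma>)"
        using pos by (simp add: gg_def A_def)
      show ?thesis unfolding e1 e2 by (simp add: mult.assoc)
    qed
    show ?thesis unfolding J_def
    proof (rule pos_integral_aux[of "u/2" u])
      show "0 < u/2" "u/2 < u" using u by auto
      show "(\<lambda>z. g2 z * exp (-(\<tau>*c)*(A+z^2))) integrable_on {0<..}"
        using slow_integrable'[OF g2c g2s, of "\<tau>*c"] \<tau> c by simp
      show "continuous_on {u/2..u} (\<lambda>z. g2 z * exp (-(\<tau>*c)*(A+z^2)))"
        by (rule continuous_on_subset[of "{0<..}"]) (use u in \<open>auto intro!: continuous_intros g2c\<close>)
      fix z :: real
      show "z > 0 \<Longrightarrow> 0 \<le> g2 z * exp (-(\<tau>*c)*(A+z^2))"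
      proof -
        assume z: "z > 0"
        have "0 \<le> sin (f2star z \<gamma>)" using f2r z by (intro sin_ge_zero) auto
        then show ?thesis unfolding eqF[OF z] using z A c by simp
      qed
      assume zl: "u/2 \<le> z" and zu: "z \<le> u"
      have z: "z > 0" using zl u by simp
      have "f2star z \<gamma> \<le> z / m^2" using f2_small[OF g z] by (simp add: m_def)
      also have "\<dots> \<le> 1" using zu u m by (simp add: field_simps)
      finally have "f2star z \<gamma> < pi" using pi_gt3 by linarith
      then have "sin (f2star z \<gamma>) > 0" using f2_pos[OF g z] by (intro sin_gt_zero) auto
      moreover have "A + z^2 > 0" using z A by (simp add: add_nonneg_pos)
      ultimately show "0 < g2 z * exp (-(\<tau>*c)*(A+z^2))" unfolding eqF[OF z] using z c by simp
    qed
  qed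
  have part1: "\<forall>\<tau>>0. rho_zhu E \<sigma> \<gamma> differentiable (at \<tau>)
          \<and> deriv (rho_zhu E \<sigma> \<gamma>) differentiable (at \<tau>)
          \<and> deriv (deriv (rho_zhu E \<sigma> \<gamma>)) \<tau> > 0"
  proof (intro allI impI conjI)
    fix \<tau> :: real assume \<tau>: "\<tau> > 0"
    show "rho_zhu E \<sigma> \<gamma> differentiable (at \<tau>)"
      using d0[OF \<tau>] real_differentiable_def by blast
    show "deriv (rho_zhu E \<sigma> \<gamma>) differentiable (at \<tau>)"
      using d1[OF \<tau>] real_differentiable_def by blast
    show "deriv (deriv (rho_zhu E \<sigma> \<gamma>)) \<tau> > 0"
      using DERIV_imp_deriv[OF d1[OF \<tau>]] J2pos[OF \<tau>] K1 by simp
  qed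
  have conv: "convex_on {0<..} (rho_zhu E \<sigma> \<gamma>)"
  proof (rule convex_on_realI[where f' = "\<lambda>t. K1 * J g1 t"])
    show "connected {0::real<..}" by simp
    show "\<And>x. x \<in> {0<..} \<Longrightarrow> (rho_zhu E \<sigma> \<gamma> has_real_derivative K1 * J g1 x) (at x)"
      using d0 by auto
    fix x y :: real assume x: "x \<in> {0<..}" and y: "y \<in> {0<..}" and xy: "x \<le> y"
    show "K1 * J g1 x \<le> K1 * J g1 y"
    proof (cases "x = y")
      case False
      then have "x < y" using xy by simp
      have "K1 * J g1 x < K1 * J g1 y"
      proof (rule DERIV_pos_imp_increasing[OF \<open>x < y\<close>])
        fix t assume "x \<le> t" "t \<le> y"
        then have t: "t > 0" using x by auto
        show "\<exists>d. ((\<lambda>t. K1 * J g1 t) has_real_derivative d) (at t) \<and> d > 0"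
          using dJ1[OF t] J2pos[OF t] K1 by (intro exI[of _ "K1 * J g2 t"]) (auto intro!: derivative_eq_intros)
      qed
      then show ?thesis by simp
    qed simp
  qed
  show ?thesis using part1 conv by blast
qed


theorem mainTheorem3:
  fixes E r \<sigma> \<gamma> :: real
  assumes "E > 0" and "r > 0" and "\<sigma> > 0"
    and "\<gamma> = 2 * r / \<sigma>^2"
    and "\<gamma> \<ge> gamma0"
  shows "(\<forall>\<zeta>>0. f2star \<zeta> \<gamma> \<in> {0..pi})
    \<and> (\<forall>\<tau>>0. rho_zhu E \<sigma> \<gamma> differentiable (at \<tau>)
          \<and> deriv (rho_zhu E \<sigma> \<gamma>) differentiable (at \<tau>)
          \<and> deriv (deriv (rho_zhu E \<sigma> \<gamma>)) \<tau> > 0)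
    \<and> convex_on {0<..} (rho_zhu E \<sigma> \<gamma>)"
proof -
  have g: "\<gamma> > 0" using assms(2,3,4) by simp
  have f2r: "\<forall>\<zeta>>0. f2star \<zeta> \<gamma> \<in> {0..pi}"
    using f2_nonneg[OF g] gamma0_ok[OF g assms(5)] by auto
  show ?thesis using f2r main_analytic[OF assms(1,3) g f2r] by blast
qed

end
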